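(* Let $m$, $\alpha$, $\bar R>1/\sqrt2$, $\Omega$ be as in the context, let $E\in C^{0,\alpha}_\ast(\Omega)$ and let $v\in C^{2,\alpha}_\ast(\Omega)$ be the solution of $\Delta v-\xi\cdot\nabla v+v=E$ in $\Omega$, $v|_{\partial\Omega}=0$. Then for all $\xi\in\Omega$, $$|v(\xi)|\le k|\xi|,\qquad k=\frac{\sup_{\eta\in\Omega}|E(\eta)|\,|\eta|}{2\bar R^2-1}.$$
   Context: $\Omega=\mathbf R^2\setminus B_{\bar R}$ with $B_{\bar R}$ the open disk of radius $\bar R$ at the origin; $m\ge1$ integer, $\alpha\in(0,1)$. For $\xi\in\Omega$, $B(\xi)$ is the unit ball about $\xi$, $[g]_{\alpha,B}$ the Hölder seminorm on $B$. For $r=0,2$, $\|v:C^{r,\alpha}_\ast(\Omega)\|=\max\big(\max_{0\le j\le r}\sup_\Omega|D^jv(\xi)||\xi|^{-r+1+j},\ \sup_\Omega[D^rv]_{\alpha,B(\xi)\cap\Omega}|\xi|^{1+\alpha}\big)$, and $C^{r,\alpha}_\ast(\Omega)$ is the space of $C^{r,\alpha}_{loc}$ functions with finite norm satisfying $v(x,-y)=-v(x,y)$ and $v(\rho_k\xi)=v(\xi)$ for all $k\in\mathbf Z$, $\rho_k$ being the reflection across the line through the origin at angle $\frac{\pi}{2m}+\frac{k\pi}{m}$ with the $x$-axis. *)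

theory Defs
  imports "HOL-Analysis.Analysis"
begin

type_synonym pt = "real \<times> real"

definition Omega :: "real \<Rightarrow> pt set" where
  "Omega R = {\<xi>. norm \<xi> \<ge> R}"

definition refl_line :: "real \<Rightarrow> pt \<Rightarrow> pt" where
  "refl_line th p = (cos (2*th) * fst p + sin (2*th) * snd p,
                     sin (2*th) * fst p - cos (2*th) * snd p)"

definition rho :: "nat \<Rightarrow> int \<Rightarrow> pt \<Rightarrow> pt" where
  "rho m k = refl_line (pi / (2 * real m) + real_of_int k * pi / real m)"

definition sym_star :: "real \<Rightarrow> nat \<Rightarrow> (pt \<Rightarrow> real) \<Rightarrow> bool" where
  "sym_star R m v \<longleftrightarrow>
     (\<forall>x y. (x, y) \<in> Omega R \<longrightarrow> v (x, -y) = - v (x, y)) \<and>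
     (\<forall>k::int. \<forall>\<xi>\<in>Omega R. v (rho m k \<xi>) = v \<xi>)"

definition wsup_fin :: "real \<Rightarrow> real \<Rightarrow> (pt \<Rightarrow> 'b::real_normed_vector) \<Rightarrow> bool" where
  "wsup_fin R p f \<longleftrightarrow> (\<exists>C. \<forall>\<xi>\<in>Omega R. norm (f \<xi>) * norm \<xi> powr p \<le> C)"

definition wholder_fin :: "real \<Rightarrow> real \<Rightarrow> (pt \<Rightarrow> 'b::real_normed_vector) \<Rightarrow> bool" where
  "wholder_fin R \<alpha> g \<longleftrightarrow>
     (\<exists>C. \<forall>\<xi>\<in>Omega R. \<forall>x\<in>ball \<xi> 1 \<inter> Omega R. \<forall>y\<in>ball \<xi> 1 \<inter> Omega R.
        norm (g x - g y) * norm \<xi> powr (1 + \<alpha>) \<le> C * dist x y powr \<alpha>)"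

definition C0a_star :: "real \<Rightarrow> nat \<Rightarrow> real \<Rightarrow> (pt \<Rightarrow> real) \<Rightarrow> bool" where
  "C0a_star R m \<alpha> E \<longleftrightarrow>
     continuous_on (Omega R) E \<and> wsup_fin R 1 E \<and> wholder_fin R \<alpha> E \<and> sym_star R m E"

definition C2a_star :: "real \<Rightarrow> nat \<Rightarrow> real \<Rightarrow> (pt \<Rightarrow> real)
    \<Rightarrow> (pt \<Rightarrow> pt \<Rightarrow>\<^sub>L real) \<Rightarrow> (pt \<Rightarrow> pt \<Rightarrow>\<^sub>L (pt \<Rightarrow>\<^sub>L real)) \<Rightarrow> bool" where
  "C2a_star R m \<alpha> v Dv D2v \<longleftrightarrow>
     (\<forall>x\<in>Omega R. (v has_derivative blinfun_apply (Dv x)) (at x within Omega R)) \<and>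
     (\<forall>x\<in>Omega R. (Dv has_derivative blinfun_apply (D2v x)) (at x within Omega R)) \<and>
     continuous_on (Omega R) D2v \<and>
     wsup_fin R (-1) v \<and> wsup_fin R 0 Dv \<and> wsup_fin R 1 D2v \<and>
     wholder_fin R \<alpha> D2v \<and> sym_star R m v"

definition laplacian :: "(pt \<Rightarrow>\<^sub>L (pt \<Rightarrow>\<^sub>L real)) \<Rightarrow> real" where
  "laplacian H = blinfun_apply (blinfun_apply H (1,0)) (1,0)
               + blinfun_apply (blinfun_apply H (0,1)) (0,1)"

end

theory Submission
  imports Defs
begin



lemma second_deriv_test:
  fixes h h' :: "real \<Rightarrow> real"
  assumes d: "0 < d"
    and hd: "\<And>t. \<bar>t\<bar> < d \<Longrightarrow> (h has_real_derivative h' t) (at t)"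
    and h2: "(h' has_real_derivative c) (at 0)"
    and mx: "\<And>t. \<bar>t\<bar> < d \<Longrightarrow> h t \<le> h 0"
  shows "h' 0 = 0" and "c \<le> 0"
proof -
  show z: "h' 0 = 0"
    by (rule DERIV_local_max[OF hd[of 0] d]) (use d mx in auto)
  show "c \<le> 0"
  proof (rule ccontr)
    assume "\<not> c \<le> 0"
    then have "0 < c" by simp
    from DERIV_pos_inc_right[OF h2 this] obtain e where e: "e > 0"
      and inc: "\<And>t. t > 0 \<Longrightarrow> t < e \<Longrightarrow> h' 0 < h' (0 + t)" by auto
    define t where "t = min e d / 2"
    have t: "0 < t" "t < e" "t < d" using e d by (auto simp: t_def)
    obtain z where z1: "0 < z" "z < t" and eq: "h t - h 0 = (t - 0) * h' z"
      using MVT2[of 0 t h h'] t hd by force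
    have "h' z > 0" using inc[of z] z1 t z by simp
    then have "t * h' z > 0" using t by simp
    then have "h t > h 0" using eq by simp
    moreover have "h t \<le> h 0" using mx[of t] t by simp
    ultimately show False by simp
  qed
qed



lemma inv_half_eq: "inverse (x::real) / 2 * (2*y) = y / x"
  by (simp add: field_simps)

lemma rho_deriv:
  fixes a b t :: real
  assumes pos: "(a+t)^2 + b^2 > 0"
  shows "((\<lambda>t. sqrt ((a+t)^2 + b^2)) has_real_derivative (a+t) / sqrt ((a+t)^2 + b^2)) (at t)"
proof -
  have p: "((\<lambda>t. (a+t)^2 + b^2) has_real_derivative 2*(a+t)) (at t)"
    by (auto intro!: derivative_eq_intros)
  have d: "((\<lambda>t. sqrt ((a+t)^2 + b^2)) has_real_derivative inverse (sqrt ((a+t)^2 + b^2)) / 2 * (2*(a+t))) (at t)"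
    by (rule DERIV_chain2[OF DERIV_real_sqrt[OF pos] p])
  have eq: "inverse (sqrt ((a+t)^2 + b^2)) / 2 * (2*(a+t)) = (a+t) / sqrt ((a+t)^2 + b^2)"
    by (metis inv_half_eq)
  show ?thesis by (rule DERIV_cong[OF d eq])
qed



lemma G_deriv:
  fixes a b t al be ga :: real and \<rho> :: "real \<Rightarrow> real"
  assumes rp: "\<rho> t > 0"
    and d: "(\<rho> has_real_derivative (a+t) / \<rho> t) (at t)"
  shows "((\<lambda>t. al * \<rho> t + be / \<rho> t + ga * ((a+t)^2 + b^2)) has_real_derivative
          al*(a+t)/\<rho> t - be*(a+t)/(\<rho> t)^3 + 2*ga*(a+t)) (at t)"
proof -
  have p: "((\<lambda>t. (a+t)^2 + b^2) has_real_derivative 2*(a+t)) (at t)"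
    by (auto intro!: derivative_eq_intros)
  have d2: "((\<lambda>t. al * \<rho> t + be / \<rho> t + ga * ((a+t)^2 + b^2)) has_real_derivative
     al * ((a+t) / \<rho> t) + ((0 * \<rho> t - be * ((a+t) / \<rho> t)) / (\<rho> t * \<rho> t)) + ga * (2*(a+t))) (at t)"
    by (rule DERIV_add[OF DERIV_add[OF DERIV_cmult[OF d] DERIV_divide[OF DERIV_const d]] DERIV_cmult[OF p]]) (use rp in auto)
  show ?thesis
    by (rule DERIV_cong[OF d2]) (use rp in \<open>simp add: field_simps power3_eq_cube\<close>)
qed

lemma G1_deriv:
  fixes a b al be ga :: real and \<rho> :: "real \<Rightarrow> real"
  assumes rp: "\<rho> 0 > 0"
    and d: "(\<rho> has_real_derivative a / \<rho> 0) (at 0)"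
  shows "((\<lambda>t. al*(a+t)/\<rho> t - be*(a+t)/(\<rho> t)^3 + 2*ga*(a+t)) has_real_derivative
          al*(1/\<rho> 0 - a^2/(\<rho> 0)^3) - be*(1/(\<rho> 0)^3 - 3*a^2/(\<rho> 0)^5) + 2*ga) (at 0)"
proof -
  have l: "((\<lambda>t. a+t) has_real_derivative 1) (at 0)"
    by (auto intro!: derivative_eq_intros)
  have c: "((\<lambda>t. (\<rho> t)^3) has_real_derivative of_nat 3 * ((a / \<rho> 0) * (\<rho> 0)^(3 - Suc 0))) (at 0)"
    by (rule DERIV_power[OF d])
  have d2: "((\<lambda>t. al*(a+t)/\<rho> t - be*(a+t)/(\<rho> t)^3 + 2*ga*(a+t)) has_real_derivative
     ((al * 1) * \<rho> 0 - al*(a+0) * (a / \<rho> 0)) / (\<rho> 0 * \<rho> 0)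
     - ((be * 1) * (\<rho> 0)^3 - be*(a+0) * (of_nat 3 * ((a / \<rho> 0) * (\<rho> 0)^(3 - Suc 0)))) / ((\<rho> 0)^3 * (\<rho> 0)^3)
     + 2*ga*1) (at 0)"
    by (rule DERIV_add[OF DERIV_diff[OF DERIV_divide[OF DERIV_cmult[OF l] d] DERIV_divide[OF DERIV_cmult[OF l] c]] DERIV_cmult[OF l]]) (use rp in auto)
  show ?thesis
    by (rule DERIV_cong[OF d2]) (use rp in \<open>simp add: field_simps eval_nat_numeral\<close>)
qed



lemma line_deriv1:
  fixes v :: "pt \<Rightarrow> real" and Dv :: "pt \<Rightarrow> pt \<Rightarrow>\<^sub>L real"
  assumes "(v has_derivative blinfun_apply (Dv (p + t *\<^sub>R e))) (at (p + t *\<^sub>R e))"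
  shows "((\<lambda>t. v (p + t *\<^sub>R e)) has_real_derivative blinfun_apply (Dv (p + t *\<^sub>R e)) e) (at t)"
proof -
  have l: "((\<lambda>t. p + t *\<^sub>R e) has_derivative (\<lambda>s. s *\<^sub>R e)) (at t)"
    by (auto intro!: derivative_eq_intros)
  have "((\<lambda>t. v (p + t *\<^sub>R e)) has_derivative (\<lambda>s. blinfun_apply (Dv (p + t *\<^sub>R e)) (s *\<^sub>R e))) (at t)"
    by (rule has_derivative_compose[OF l assms])
  then show ?thesis
    unfolding has_field_derivative_def
    by (rule has_derivative_eq_rhs) (auto simp: blinfun.scaleR_right)
qed

lemma line_deriv2:
  fixes Dv :: "pt \<Rightarrow> pt \<Rightarrow>\<^sub>L real" and D2v :: "pt \<Rightarrow> pt \<Rightarrow>\<^sub>L (pt \<Rightarrow>\<^sub>L real)"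
  assumes "(Dv has_derivative blinfun_apply (D2v p)) (at p)"
  shows "((\<lambda>t. blinfun_apply (Dv (p + t *\<^sub>R e)) e) has_real_derivative blinfun_apply (blinfun_apply (D2v p) e) e) (at 0)"
proof -
  have l: "((\<lambda>t. p + t *\<^sub>R e) has_derivative (\<lambda>s. s *\<^sub>R e)) (at 0)"
    by (auto intro!: derivative_eq_intros)
  have a: "(Dv has_derivative blinfun_apply (D2v ((\<lambda>t. p + t *\<^sub>R e) 0))) (at ((\<lambda>t. p + t *\<^sub>R e) 0))"
    using assms by simp
  have c: "((\<lambda>t. Dv (p + t *\<^sub>R e)) has_derivative (\<lambda>s. blinfun_apply (D2v p) (s *\<^sub>R e))) (at 0)"
    using has_derivative_compose[OF l a] by simp
  have "((\<lambda>t. blinfun_apply (Dv (p + t *\<^sub>R e)) e) has_derivative (\<lambda>s. blinfun_apply (blinfun_apply (D2v p) (s *\<^sub>R e)) e)) (at 0)"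
    by (rule bounded_linear.has_derivative[OF blinfun.bounded_linear_left c])
  then show ?thesis
    unfolding has_field_derivative_def
    by (rule has_derivative_eq_rhs) (auto simp: blinfun.scaleR_right blinfun.scaleR_left)
qed




lemma dir_lemma:
  fixes v :: "pt \<Rightarrow> real" and Dv :: "pt \<Rightarrow> pt \<Rightarrow>\<^sub>L real"
    and D2v :: "pt \<Rightarrow> pt \<Rightarrow>\<^sub>L (pt \<Rightarrow>\<^sub>L real)"
  assumes R0: "R > 0" and pR: "norm p > R"
    and nrm: "\<And>t. norm (p + t *\<^sub>R e) = sqrt ((c+t)^2 + d^2)"
    and e1: "norm e = 1"
    and dv: "\<forall>x. R < norm x \<longrightarrow> (v has_derivative blinfun_apply (Dv x)) (at x)"
    and d2v: "\<forall>x. R < norm x \<longrightarrow> (Dv has_derivative blinfun_apply (D2v x)) (at x)"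
    and gle: "\<forall>x. R \<le> norm x \<longrightarrow> v x - (al*norm x + be/norm x + ga*(norm x)^2) \<le> 0"
    and geq: "v p - (al*norm p + be/norm p + ga*(norm p)^2) = 0"
  shows "blinfun_apply (Dv p) e = al*c/norm p - be*c/(norm p)^3 + 2*ga*c"
    and "blinfun_apply (blinfun_apply (D2v p) e) e \<le>
          al*(1/norm p - c^2/(norm p)^3) - be*(1/(norm p)^3 - 3*c^2/(norm p)^5) + 2*ga"
proof -
  define \<rho> where "\<rho> = (\<lambda>t. sqrt ((c+t)^2 + d^2))"
  have nr: "\<And>t. norm (p + t *\<^sub>R e) = \<rho> t" using nrm by (simp add: \<rho>_def)
  define dd where "dd = norm p - R"
  have dd: "dd > 0" using pR by (simp add: dd_def)
  have far: "R < norm (p + t *\<^sub>R e)" if "\<bar>t\<bar> < dd" for t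
  proof -
    have "norm p \<le> norm (p + t *\<^sub>R e) + norm (t *\<^sub>R e)"
      by (metis add_diff_cancel norm_triangle_ineq4)
    then show ?thesis using that e1 by (simp add: dd_def)
  qed
  have rpos: "\<rho> t > 0" if "\<bar>t\<bar> < dd" for t
    using far[OF that] R0 nr[of t] by simp
  have rho_pos_sq: "(c+t)^2 + d^2 > 0" if "\<bar>t\<bar> < dd" for t
  proof -
    have "sqrt ((c+t)^2 + d^2) > 0" using rpos[OF that] by (simp add: \<rho>_def)
    then show ?thesis by (metis real_sqrt_gt_0_iff)
  qed
  have rsq: "(\<rho> t)^2 = (c+t)^2 + d^2" for t
    unfolding \<rho>_def by (rule real_sqrt_pow2) (simp add: add_nonneg_nonneg)
  have rd: "(\<rho> has_real_derivative (c+t) / \<rho> t) (at t)" if "\<bar>t\<bar> < dd" for t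
    unfolding \<rho>_def by (rule rho_deriv[OF rho_pos_sq[OF that]])
  define h where "h = (\<lambda>t. v (p + t *\<^sub>R e) - (al * \<rho> t + be / \<rho> t + ga * ((c+t)^2 + d^2)))"
  define h' where "h' = (\<lambda>t. blinfun_apply (Dv (p + t *\<^sub>R e)) e - (al*(c+t)/\<rho> t - be*(c+t)/(\<rho> t)^3 + 2*ga*(c+t)))"
  define cc where "cc = blinfun_apply (blinfun_apply (D2v p) e) e -
        (al*(1/\<rho> 0 - c^2/(\<rho> 0)^3) - be*(1/(\<rho> 0)^3 - 3*c^2/(\<rho> 0)^5) + 2*ga)"
  have hd: "(h has_real_derivative h' t) (at t)" if "\<bar>t\<bar> < dd" for t
  proof -
    have "(v has_derivative blinfun_apply (Dv (p + t *\<^sub>R e))) (at (p + t *\<^sub>R e))"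
      using dv far[OF that] by blast
    then show ?thesis unfolding h_def h'_def by (rule DERIV_diff[OF line_deriv1 G_deriv[OF rpos[OF that] rd[OF that]]])
  qed
  have h2: "(h' has_real_derivative cc) (at 0)"
  proof -
    have A: "(Dv has_derivative blinfun_apply (D2v p)) (at p)"
      using d2v[rule_format, OF pR] .
    have B: "(\<rho> has_real_derivative c / \<rho> 0) (at 0)" using rd[of 0] dd by simp
    have r0: "\<rho> 0 > 0" using rpos[of 0] dd by simp
    show ?thesis unfolding h'_def cc_def by (rule DERIV_diff[OF line_deriv2[of Dv D2v p e, OF A] G1_deriv[OF r0 B]])
  qed
  have mx: "h t \<le> h 0" if "\<bar>t\<bar> < dd" for t
  proof -
    have "h t = v (p + t *\<^sub>R e) - (al*norm (p + t *\<^sub>R e) + be/norm (p + t *\<^sub>R e) + ga*(norm (p + t *\<^sub>R e))^2)"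
      unfolding h_def nr rsq by simp
    also have "\<dots> \<le> 0" using gle[rule_format, OF less_imp_le[OF far[OF that]]] .
    also have "0 = h 0"
      using geq unfolding h_def using nr[of 0] rsq[of 0] by simp
    finally show ?thesis .
  qed
  have r0: "\<rho> 0 = norm p" using nr[of 0] by simp
  from second_deriv_test[OF dd hd h2 mx]
  have "h' 0 = 0" "cc \<le> 0" by auto
  then show "blinfun_apply (Dv p) e = al*c/norm p - be*c/(norm p)^3 + 2*ga*c"
    and "blinfun_apply (blinfun_apply (D2v p) e) e \<le>
          al*(1/norm p - c^2/(norm p)^3) - be*(1/(norm p)^3 - 3*c^2/(norm p)^5) + 2*ga"
    unfolding h'_def cc_def r0 by auto
qed



lemma alg_final:
  fixes a b r al be ga k M R S dl :: real
  assumes r: "r > 0" and ab: "a^2 + b^2 = r^2"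
    and H: "lap \<le> al*(1/r - a^2/r^3) - be*(1/r^3 - 3*a^2/r^5) + 2*ga
                 + (al*(1/r - b^2/r^3) - be*(1/r^3 - 3*b^2/r^5) + 2*ga)"
    and D: "dvp = a * (al*a/r - be*a/r^3 + 2*ga*a) + b * (al*b/r - be*b/r^3 + 2*ga*b)"
    and V: "vp = al*r + be/r + ga*r^2"
  shows "lap - dvp + vp \<le> al/r + be*(2/r + 1/r^3) + ga*(4 - r^2)"
proof -
  have e1: "al*(1/r - a^2/r^3) - be*(1/r^3 - 3*a^2/r^5) + 2*ga
                 + (al*(1/r - b^2/r^3) - be*(1/r^3 - 3*b^2/r^5) + 2*ga)
          = al*(2/r - (a^2+b^2)/r^3) - be*(2/r^3 - 3*(a^2+b^2)/r^5) + 4*ga"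
    by (simp add: algebra_simps add_divide_distrib diff_divide_distrib)
  have e2: "al*(2/r - (a^2+b^2)/r^3) - be*(2/r^3 - 3*(a^2+b^2)/r^5) + 4*ga = al/r + be/r^3 + 4*ga"
    unfolding ab using r by (simp add: field_simps eval_nat_numeral)
  have e3: "dvp = (a^2+b^2) * (al/r - be/r^3 + 2*ga)"
    unfolding D by (simp add: algebra_simps power2_eq_square add_divide_distrib)
  have e4: "(a^2+b^2) * (al/r - be/r^3 + 2*ga) = al*r - be/r + 2*ga*r^2"
    unfolding ab using r by (simp add: field_simps eval_nat_numeral)
  have "lap - dvp + vp \<le> al/r + be/r^3 + 4*ga - (al*r - be/r + 2*ga*r^2) + (al*r + be/r + ga*r^2)"
    using H e1 e2 e3 e4 V by linarith
  also have "\<dots> = al/r + be*(2/r + 1/r^3) + ga*(4 - r^2)"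
    by (simp add: algebra_simps)
  finally show ?thesis .
qed

lemma alg_contra:
  fixes r k M R S dl :: real
  assumes r: "r \<ge> R" "R > 0" and k: "k \<ge> 0" "k * (2*R^2 - 1) = S" and M: "M > 0"
    and dl: "dl = 1/100"
    and ineq: "- S / r \<le> (k+M)/r + (-(k*R^2 + M/2))*(2/r + 1/r^3) + (M*dl)*(4 - r^2)"
  shows False
proof -
  have r0: "r > 0" using r by simp
  have eq: "(k+M)/r + (-(k*R^2 + M/2))*(2/r + 1/r^3) + (M*dl)*(4 - r^2)
     = - S/r - k*R^2/r^3 + M*(-1/(2*r^3) + dl*(4 - r^2))"
    unfolding k(2)[symmetric] using r0 by (simp add: field_simps eval_nat_numeral)
  have B: "-1/(2*r^3) + dl*(4 - r^2) < 0"
  proof (cases "r^2 \<ge> 4")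
    case True
    then have "dl*(4 - r^2) \<le> 0" using dl by (simp add: mult_nonneg_nonpos)
    moreover have "1/(2*r^3) > 0" using r0 by simp
    ultimately show ?thesis by linarith
  next
    case False
    have "r < 2"
    proof (rule ccontr)
      assume "\<not> r < 2"
      then have "2 \<le> r" by simp
      then have "(2::real)^2 \<le> r^2" by (rule power_mono) simp
      with False show False by simp
    qed
    then have "r^3 < 2^3" using r0 by (intro power_strict_mono) auto
    then have r3: "r^3 < 8" by simp
    have r3p: "r^3 > 0" using r0 by simp
    have "1/(2*r^3) > 1/16" using r3 r3p by (simp add: field_simps)
    moreover have "dl*(4 - r^2) \<le> 4/100"
    proof -
      have "r^2 \<ge> 0" by simp
      then show ?thesis unfolding dl by simp
    qed
    ultimately show ?thesis by linarith
  qed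
  have "k*R^2/r^3 \<ge> 0" using k r0 by simp
  moreover have "M*(-1/(2*r^3) + dl*(4 - r^2)) < 0" using M B by (simp add: mult_pos_neg)
  ultimately show False using ineq eq by linarith
qed




lemma norm_e1: "norm (p + t *\<^sub>R (1::real,0::real)) = sqrt ((fst p + t)^2 + (snd p)^2)"
  by (cases p) (simp add: norm_Pair)

lemma norm_e2: "norm (p + t *\<^sub>R (0::real,1::real)) = sqrt ((snd p + t)^2 + (fst p)^2)"
  by (cases p) (simp add: norm_Pair add.commute)

lemma norm_sq_pt: "(norm (p::pt))^2 = (fst p)^2 + (snd p)^2"
  by (cases p) (simp add: norm_Pair)

lemma one_sided:
  fixes v :: "pt \<Rightarrow> real" and Dv :: "pt \<Rightarrow> pt \<Rightarrow>\<^sub>L real"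
    and D2v :: "pt \<Rightarrow> pt \<Rightarrow>\<^sub>L (pt \<Rightarrow>\<^sub>L real)" and R S C :: real
  assumes R0: "R > 0" and R2: "2*R^2 - 1 > 0" and S: "S \<ge> 0"
    and dv: "\<forall>x. R < norm x \<longrightarrow> (v has_derivative blinfun_apply (Dv x)) (at x)"
    and d2v: "\<forall>x. R < norm x \<longrightarrow> (Dv has_derivative blinfun_apply (D2v x)) (at x)"
    and cont: "continuous_on (Omega R) v"
    and grow: "\<forall>x\<in>Omega R. v x \<le> C * norm x"
    and bd: "\<forall>x. norm x = R \<longrightarrow> v x = 0"
    and eqn: "\<forall>x. R < norm x \<longrightarrow> - S / norm x \<le> laplacian (D2v x) - blinfun_apply (Dv x) x + v x"
  shows "\<forall>x\<in>Omega R. v x \<le> S / (2*R^2 - 1) * norm x"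
proof -
  define k where "k = S / (2*R^2 - 1)"
  have k0: "k \<ge> 0" using S R2 by (simp add: k_def)
  have kS: "k * (2*R^2 - 1) = S" using R2 by (simp add: k_def)
  define dl :: real where "dl = 1/100"
  define \<Phi> where "\<Phi> = (\<lambda>x::pt. k * (norm x - R^2 / norm x))"
  define \<psi> where "\<psi> = (\<lambda>x::pt. norm x - 1 / (2 * norm x) + dl * (norm x)^2)"
  define z where "z = (\<lambda>x. (v x - \<Phi> x) / \<psi> x)"
  have nR: "norm x \<ge> R" if "x \<in> Omega R" for x using that by (simp add: Omega_def)
  have npos: "norm x > 0" if "x \<in> Omega R" for x using nR[OF that] R0 by linarith
  have psi1: "norm x - 1 / (2 * norm x) > 0" if "x \<in> Omega R" for x
  proof -
    have n: "norm x > 0" using npos[OF that] .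
    have "R^2 \<le> (norm x)^2" using nR[OF that] R0 by (intro power_mono) auto
    then have "2 * (norm x)^2 - 1 > 0" using R2 by simp
    then have "(2 * (norm x)^2 - 1) / (2 * norm x) > 0" using n by simp
    also have "(2 * (norm x)^2 - 1) / (2 * norm x) = norm x - 1 / (2 * norm x)"
      using n by (simp add: field_simps power2_eq_square)
    finally show ?thesis .
  qed
  have psi_ge: "\<psi> x \<ge> dl * (norm x)^2" if "x \<in> Omega R" for x
    using psi1[OF that] by (simp add: \<psi>_def)
  have psi_pos: "\<psi> x > 0" if "x \<in> Omega R" for x
  proof -
    have "dl * (norm x)^2 \<ge> 0" by (simp add: dl_def)
    then show ?thesis using psi1[OF that] by (simp add: \<psi>_def)
  qed
  have Phi0: "\<Phi> x \<ge> 0" if "x \<in> Omega R" for x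
  proof -
    have n: "norm x > 0" using npos[OF that] .
    have "R^2 \<le> (norm x)^2" using nR[OF that] R0 by (intro power_mono) auto
    then have "R^2 / norm x \<le> norm x" using n by (simp add: field_simps power2_eq_square)
    then show ?thesis using k0 by (simp add: \<Phi>_def)
  qed
  have Phik: "\<Phi> x \<le> k * norm x" if "x \<in> Omega R" for x
  proof -
    have "R^2 / norm x \<ge> 0" by simp
    then show ?thesis using k0 by (simp add: \<Phi>_def algebra_simps mult_left_mono)
  qed
  have zle: "\<forall>x\<in>Omega R. z x \<le> 0"
  proof (rule ccontr)
    assume "\<not> (\<forall>x\<in>Omega R. z x \<le> 0)"
    then obtain q where qO: "q \<in> Omega R" and zq: "z q > 0" by auto
    have zbound: "z x \<le> \<bar>C\<bar> / (dl * norm x)" if xO: "x \<in> Omega R" for x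
    proof -
      have n: "norm x > 0" using npos[OF xO] .
      have ps: "\<psi> x > 0" using psi_pos[OF xO] .
      have num: "v x - \<Phi> x \<le> \<bar>C\<bar> * norm x"
      proof -
        have "v x \<le> C * norm x" using grow xO by blast
        also have "\<dots> \<le> \<bar>C\<bar> * norm x" using n by (intro mult_right_mono) auto
        finally show ?thesis using Phi0[OF xO] by linarith
      qed
      have "z x \<le> \<bar>C\<bar> * norm x / \<psi> x"
        unfolding z_def using num ps by (intro divide_right_mono) auto
      also have "\<dots> \<le> \<bar>C\<bar> * norm x / (dl * (norm x)^2)"
        using psi_ge[OF xO] n ps by (intro divide_left_mono) (auto simp: dl_def)
      also have "\<dots> = \<bar>C\<bar> / (dl * norm x)"
        using n by (simp add: field_simps power2_eq_square)
      finally show ?thesis .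
    qed
    define \<rho>0 where "\<rho>0 = max (R+1) (\<bar>C\<bar> / (dl * z q) + 1)"
    have big: "z x < z q" if xO: "x \<in> Omega R" and xb: "norm x > \<rho>0" for x
    proof -
      have n: "norm x > 0" using npos[OF xO] .
      have "norm x > \<bar>C\<bar> / (dl * z q)" using xb by (simp add: \<rho>0_def)
      then have "\<bar>C\<bar> < norm x * (dl * z q)" using zq by (simp add: dl_def field_simps)
      then have "\<bar>C\<bar> / (dl * norm x) < z q" using n zq by (simp add: dl_def field_simps)
      then show ?thesis using zbound[OF xO] by linarith
    qed
    define K where "K = cball (0::pt) \<rho>0 \<inter> Omega R"
    have clO: "closed (Omega R)"
      unfolding Omega_def by (intro closed_Collect_le continuous_intros)
    have Kc: "compact K" unfolding K_def by (intro compact_Int_closed compact_cball clO)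
    have qK: "q \<in> K"
    proof -
      have "\<not> norm q > \<rho>0" using big[OF qO] by auto
      then show ?thesis using qO by (simp add: K_def)
    qed
    have KO: "K \<subseteq> Omega R" by (auto simp: K_def)
    have zc: "continuous_on K z"
    proof -
      have cv: "continuous_on K v" using continuous_on_subset[OF cont KO] .
      have "\<forall>x\<in>K. norm x \<noteq> 0" using npos KO by force
      moreover have "\<forall>x\<in>K. \<psi> x \<noteq> 0" using psi_pos KO by force
      ultimately show ?thesis unfolding z_def \<psi>_def \<Phi>_def
        by (intro continuous_intros cv) auto
    qed
    obtain p where pK: "p \<in> K" and pmax: "\<forall>y\<in>K. z y \<le> z p"
      using continuous_attains_sup[OF Kc _ zc] qK by blast
    define M where "M = z p"
    have M0: "M > 0" using pmax qK zq by (force simp: M_def)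
    have pO: "p \<in> Omega R" using pK KO by auto
    have glob: "z x \<le> M" if xO: "x \<in> Omega R" for x
    proof (cases "norm x > \<rho>0")
      case True then show ?thesis using big[OF xO] pmax qK by (force simp: M_def)
    next
      case False then have "x \<in> K" using xO by (simp add: K_def)
      then show ?thesis using pmax by (simp add: M_def)
    qed
    have pR: "norm p > R"
    proof (rule ccontr)
      assume "\<not> norm p > R"
      then have "norm p = R" using nR[OF pO] by simp
      then have "v p = 0" "\<Phi> p = 0" using bd[rule_format, of p] R0 by (auto simp: \<Phi>_def power2_eq_square)
      then have "z p = 0" by (simp add: z_def)
      then show False using M0 by (simp add: M_def)
    qed
    define al where "al = k + M"
    define be where "be = - (k*R^2 + M/2)"
    define ga where "ga = M * dl"
    have Fform: "\<Phi> x + M * \<psi> x = al * norm x + be / norm x + ga * (norm x)^2" for x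
      by (simp add: \<Phi>_def \<psi>_def al_def be_def ga_def algebra_simps add_divide_distrib diff_divide_distrib)
    have gle: "\<forall>x. R \<le> norm x \<longrightarrow> v x - (al*norm x + be/norm x + ga*(norm x)^2) \<le> 0"
    proof (intro allI impI)
      fix x :: pt assume "R \<le> norm x"
      then have xO: "x \<in> Omega R" by (simp add: Omega_def)
      have "(v x - \<Phi> x) / \<psi> x \<le> M" using glob[OF xO] by (simp add: z_def)
      then have "v x - \<Phi> x \<le> M * \<psi> x" using psi_pos[OF xO] by (simp add: divide_le_eq)
      then show "v x - (al*norm x + be/norm x + ga*(norm x)^2) \<le> 0" using Fform[of x] by linarith
    qed
    have geq: "v p - (al*norm p + be/norm p + ga*(norm p)^2) = 0"
    proof -
      have "(v p - \<Phi> p) / \<psi> p = M" by (simp add: M_def z_def)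
      then have "v p - \<Phi> p = M * \<psi> p" using psi_pos[OF pO] by (simp add: divide_eq_eq)
      then show ?thesis using Fform[of p] by linarith
    qed
    define a where "a = fst p"
    define b where "b = snd p"
    define r where "r = norm p"
    have r0: "r > 0" using pR R0 unfolding r_def by linarith
    have ab: "a^2 + b^2 = r^2" using norm_sq_pt[of p] by (simp add: a_def b_def r_def)
    have n1: "norm ((1::real, 0::real)) = 1" by (simp add: norm_Pair)
    have n2: "norm ((0::real, 1::real)) = 1" by (simp add: norm_Pair)
    note d1 = dir_lemma[OF R0 pR norm_e1 n1 dv d2v gle geq]
    note d2 = dir_lemma[OF R0 pR norm_e2 n2 dv d2v gle geq]
    have lap: "laplacian (D2v p) \<le> al*(1/r - a^2/r^3) - be*(1/r^3 - 3*a^2/r^5) + 2*ga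
                 + (al*(1/r - b^2/r^3) - be*(1/r^3 - 3*b^2/r^5) + 2*ga)"
      using d1(2) d2(2) unfolding laplacian_def a_def b_def r_def by linarith
    have pdec: "p = a *\<^sub>R (1::real, 0::real) + b *\<^sub>R (0, 1)"
      by (simp add: a_def b_def)
    have dvp: "blinfun_apply (Dv p) p = a * (al*a/r - be*a/r^3 + 2*ga*a) + b * (al*b/r - be*b/r^3 + 2*ga*b)"
    proof -
      have "blinfun_apply (Dv p) p = a * blinfun_apply (Dv p) (1,0) + b * blinfun_apply (Dv p) (0,1)"
      proof -
        have "blinfun_apply (Dv p) (a *\<^sub>R (1::real, 0::real) + b *\<^sub>R (0, 1)) = a * blinfun_apply (Dv p) (1,0) + b * blinfun_apply (Dv p) (0,1)"
          by (simp only: blinfun.add_right blinfun.scaleR_right real_scaleR_def)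
        then show ?thesis using pdec by simp
      qed
      then show ?thesis using d1(1) d2(1) by (simp add: a_def b_def r_def)
    qed
    have vp: "v p = al*r + be/r + ga*r^2" using geq by (simp add: r_def)
    have "laplacian (D2v p) - blinfun_apply (Dv p) p + v p \<le> al/r + be*(2/r + 1/r^3) + ga*(4 - r^2)"
      by (rule alg_final[OF r0 ab lap dvp vp])
    moreover have "- S / r \<le> laplacian (D2v p) - blinfun_apply (Dv p) p + v p"
      using eqn[rule_format, OF pR] by (simp add: r_def)
    ultimately have "- S / r \<le> (k+M)/r + (-(k*R^2 + M/2))*(2/r + 1/r^3) + (M*dl)*(4 - r^2)"
      by (simp add: al_def be_def ga_def)
    then show False
      by (rule alg_contra[OF _ R0 k0 kS M0 dl_def, rotated]) (use pR in \<open>simp add: r_def\<close>)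
  qed
  show ?thesis
  proof
    fix x assume xO: "x \<in> Omega R"
    have "(v x - \<Phi> x) / \<psi> x \<le> 0" using zle xO by (simp add: z_def)
    then have "v x \<le> \<Phi> x" using psi_pos[OF xO] by (simp add: divide_le_0_iff)
    then show "v x \<le> S / (2*R^2 - 1) * norm x" using Phik[OF xO] by (simp add: k_def)
  qed
qed



lemma int_pt: "R < norm (x::pt) \<Longrightarrow> at x within Omega R = at x"
proof -
  assume h: "R < norm x"
  have "{y::pt. R < norm y} \<subseteq> interior (Omega R)"
    by (rule interior_maximal) (auto simp: Omega_def intro!: open_Collect_less continuous_intros)
  then have "x \<in> interior (Omega R)" using h by auto
  then show ?thesis by (rule at_within_interior)
qed

theorem mainTheorem8:
  fixes m :: nat and \<alpha> Rb :: real
    and E v :: "pt \<Rightarrow> real"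
    and Dv :: "pt \<Rightarrow> pt \<Rightarrow>\<^sub>L real"
    and D2v :: "pt \<Rightarrow> pt \<Rightarrow>\<^sub>L (pt \<Rightarrow>\<^sub>L real)"
  assumes "m \<ge> 1" and "0 < \<alpha>" and "\<alpha> < 1"
    and "Rb > 1 / sqrt 2"
    and "C0a_star Rb m \<alpha> E"
    and "C2a_star Rb m \<alpha> v Dv D2v"
    and "\<forall>\<xi>\<in>Omega Rb. laplacian (D2v \<xi>) - blinfun_apply (Dv \<xi>) \<xi> + v \<xi> = E \<xi>"
    and "\<forall>\<xi>. norm \<xi> = Rb \<longrightarrow> v \<xi> = 0"
  shows "\<forall>\<xi>\<in>Omega Rb. \<bar>v \<xi>\<bar> \<le>
           ((SUP \<eta>\<in>Omega Rb. \<bar>E \<eta>\<bar> * norm \<eta>) / (2 * Rb^2 - 1)) * norm \<xi>"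
proof -
  note Rb = assms(4) and CE = assms(5) and Cv = assms(6) and eqn = assms(7) and bd = assms(8)
  define S where "S = (SUP \<eta>\<in>Omega Rb. \<bar>E \<eta>\<bar> * norm \<eta>)"
  have s2: "sqrt 2 > 0" by simp
  have R0: "Rb > 0" using Rb s2 by (smt (verit) divide_pos_pos)
  have "Rb * sqrt 2 > 1" using Rb s2 by (simp add: field_simps)
  then have "(Rb * sqrt 2)^2 > 1^2" using R0 by (intro power_strict_mono) auto
  then have R2: "2*Rb^2 - 1 > 0" by (simp add: power_mult_distrib)
  have nR: "norm x \<ge> Rb" if "x \<in> Omega Rb" for x using that by (simp add: Omega_def)
  have npos: "norm x > 0" if "x \<in> Omega Rb" for x using nR[OF that] R0 by linarith
  from Cv have dvw: "\<forall>x\<in>Omega Rb. (v has_derivative blinfun_apply (Dv x)) (at x within Omega Rb)"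
    and d2vw: "\<forall>x\<in>Omega Rb. (Dv has_derivative blinfun_apply (D2v x)) (at x within Omega Rb)"
    and wv: "wsup_fin Rb (-1) v"
    unfolding C2a_star_def by auto
  have dv: "\<forall>x. Rb < norm x \<longrightarrow> (v has_derivative blinfun_apply (Dv x)) (at x)"
  proof (intro allI impI)
    fix x :: pt assume h: "Rb < norm x"
    then have "x \<in> Omega Rb" by (simp add: Omega_def)
    then have "(v has_derivative blinfun_apply (Dv x)) (at x within Omega Rb)" using dvw by blast
    then show "(v has_derivative blinfun_apply (Dv x)) (at x)" using int_pt[OF h] by simp
  qed
  have d2v: "\<forall>x. Rb < norm x \<longrightarrow> (Dv has_derivative blinfun_apply (D2v x)) (at x)"
  proof (intro allI impI)
    fix x :: pt assume h: "Rb < norm x"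
    then have "x \<in> Omega Rb" by (simp add: Omega_def)
    then have "(Dv has_derivative blinfun_apply (D2v x)) (at x within Omega Rb)" using d2vw by blast
    then show "(Dv has_derivative blinfun_apply (D2v x)) (at x)" using int_pt[OF h] by simp
  qed
  have cont: "continuous_on (Omega Rb) v"
    by (rule has_derivative_continuous_on) (use dvw in blast)
  obtain C where C: "\<forall>\<xi>\<in>Omega Rb. norm (v \<xi>) * norm \<xi> powr (-1) \<le> C"
    using wv unfolding wsup_fin_def by blast
  have grow: "\<forall>x\<in>Omega Rb. \<bar>v x\<bar> \<le> C * norm x"
  proof
    fix x assume xO: "x \<in> Omega Rb"
    have n: "norm x > 0" using npos[OF xO] .
    have "\<bar>v x\<bar> / norm x \<le> C" using C xO n by (simp add: powr_minus divide_inverse)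
    then show "\<bar>v x\<bar> \<le> C * norm x" using n by (simp add: divide_le_eq)
  qed
  from CE obtain CE where CEb: "\<forall>\<xi>\<in>Omega Rb. norm (E \<xi>) * norm \<xi> powr 1 \<le> CE"
    unfolding C0a_star_def wsup_fin_def by blast
  have bdd: "bdd_above ((\<lambda>\<eta>. \<bar>E \<eta>\<bar> * norm \<eta>) ` Omega Rb)"
    using CEb by (intro bdd_aboveI2[of _ _ CE]) auto
  have Sup: "\<bar>E x\<bar> * norm x \<le> S" if "x \<in> Omega Rb" for x
    unfolding S_def by (rule cSUP_upper[OF that bdd])
  have ptO: "(Rb, 0) \<in> Omega Rb" using R0 by (simp add: Omega_def norm_Pair)
  have S0: "S \<ge> 0" using Sup[OF ptO] by (smt (verit) mult_nonneg_nonneg abs_ge_zero norm_ge_zero)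
  have Elow: "- S / norm x \<le> E x" if "x \<in> Omega Rb" for x
  proof -
    have n: "norm x > 0" using npos[OF that] .
    have "- E x * norm x \<le> S" using Sup[OF that] by (smt (verit) abs_ge_self abs_minus_cancel mult_right_mono norm_ge_zero abs_mult_pos)
    then show ?thesis using n by (simp add: field_simps)
  qed
  have Eup: "- S / norm x \<le> - E x" if "x \<in> Omega Rb" for x
  proof -
    have n: "norm x > 0" using npos[OF that] .
    have "E x * norm x \<le> S" using Sup[OF that] by (smt (verit) abs_ge_self mult_right_mono norm_ge_zero)
    then show ?thesis using n by (simp add: field_simps)
  qed
  have up: "\<forall>x\<in>Omega Rb. v x \<le> S / (2*Rb^2 - 1) * norm x"
  proof (rule one_sided[OF R0 R2 S0 dv d2v cont _ bd])
    show "\<forall>x\<in>Omega Rb. v x \<le> C * norm x" using grow by force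
    show "\<forall>x. Rb < norm x \<longrightarrow> - S / norm x \<le> laplacian (D2v x) - blinfun_apply (Dv x) x + v x"
    proof (intro allI impI)
      fix x :: pt assume "Rb < norm x"
      then have xO: "x \<in> Omega Rb" by (simp add: Omega_def)
      show "- S / norm x \<le> laplacian (D2v x) - blinfun_apply (Dv x) x + v x"
        using Elow[OF xO] eqn xO by simp
    qed
  qed
  have low: "\<forall>x\<in>Omega Rb. - v x \<le> S / (2*Rb^2 - 1) * norm x"
  proof (rule one_sided[of Rb S "\<lambda>x. - v x" "\<lambda>x. - Dv x" "\<lambda>x. - D2v x" C, OF R0 R2 S0])
    show "\<forall>x. Rb < norm x \<longrightarrow> ((\<lambda>x. - v x) has_derivative blinfun_apply (- Dv x)) (at x)"
    proof (intro allI impI)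
      fix x :: pt assume "Rb < norm x"
      then have "(v has_derivative blinfun_apply (Dv x)) (at x)" using dv by blast
      then have "((\<lambda>x. - v x) has_derivative (\<lambda>h. - blinfun_apply (Dv x) h)) (at x)"
        by (rule has_derivative_minus)
      then show "((\<lambda>x. - v x) has_derivative blinfun_apply (- Dv x)) (at x)"
        by (rule has_derivative_eq_rhs) (auto simp: fun_eq_iff uminus_blinfun.rep_eq)
    qed
    show "\<forall>x. Rb < norm x \<longrightarrow> ((\<lambda>x. - Dv x) has_derivative blinfun_apply (- D2v x)) (at x)"
    proof (intro allI impI)
      fix x :: pt assume "Rb < norm x"
      then have "(Dv has_derivative blinfun_apply (D2v x)) (at x)" using d2v by blast
      then have "((\<lambda>x. - Dv x) has_derivative (\<lambda>h. - blinfun_apply (D2v x) h)) (at x)"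
        by (rule has_derivative_minus)
      then show "((\<lambda>x. - Dv x) has_derivative blinfun_apply (- D2v x)) (at x)"
        by (rule has_derivative_eq_rhs) (auto simp: fun_eq_iff uminus_blinfun.rep_eq)
    qed
    show "continuous_on (Omega Rb) (\<lambda>x. - v x)" using cont by (intro continuous_intros)
    show "\<forall>x\<in>Omega Rb. - v x \<le> C * norm x" using grow by force
    show "\<forall>x. norm x = Rb \<longrightarrow> - v x = 0" using bd by simp
    show "\<forall>x. Rb < norm x \<longrightarrow> - S / norm x \<le> laplacian (- D2v x) - blinfun_apply (- Dv x) x + - v x"
    proof (intro allI impI)
      fix x :: pt assume "Rb < norm x"
      then have xO: "x \<in> Omega Rb" by (simp add: Omega_def)
      have "laplacian (- D2v x) = - laplacian (D2v x)" by (simp add: laplacian_def uminus_blinfun.rep_eq)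
      then show "- S / norm x \<le> laplacian (- D2v x) - blinfun_apply (- Dv x) x + - v x"
        using Eup[OF xO] eqn[rule_format, OF xO] by (simp add: uminus_blinfun.rep_eq)
    qed
  qed
  show ?thesis
  proof
    fix x assume xO: "x \<in> Omega Rb"
    show "\<bar>v x\<bar> \<le> (SUP \<eta>\<in>Omega Rb. \<bar>E \<eta>\<bar> * norm \<eta>) / (2 * Rb^2 - 1) * norm x"
      using up xO low unfolding S_def by (simp add: abs_le_iff)
  qed
qed


end
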